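(* Let $Q\in\mathcal N_\kappa(\mathcal H)$ have the realization $Q(z)=Q(z_0)^*+(z-\overline{z_0})\Gamma^+\big(I+(z-z_0)(A-z)^{-1}\big)\Gamma$ with $Q(z_0)$ boundedly invertible, let $\widehat Q(z):=-Q(z)^{-1}$, $\Gamma_z:=\big(I+(z-z_0)(A-z)^{-1}\big)\Gamma$, $\widehat\Gamma:=\Gamma\widehat Q(z_0)=-\Gamma Q(z_0)^{-1}$, and let $\widehat A$ be the relation with $$(\widehat A-z)^{-1}=(A-z)^{-1}+\Gamma_z\widehat Q(z)\Gamma_{\overline z}^+ ,$$ so that $\widehat Q(z)=\widehat Q(z_0)^*+(z-\overline{z_0})\widehat\Gamma^+\big(I+(z-z_0)(\widehat A-z)^{-1}\big)\widehat\Gamma$. Define $\widehat\Gamma_z:=\big(I+(z-z_0)(\widehat A-z)^{-1}\big)\widehat\Gamma$. Then, for all $z\in\varrho(A)\cap\varrho(\widehat A)$ at which $Q(z)$ is boundedly invertible, $$\widehat\Gamma_z=\Gamma_z\widehat Q(z)\qquad\text{and}\qquad (A-z)^{-1}=(\widehat A-z)^{-1}+\widehat\Gamma_zQ(z)\widehat\Gamma_{\overline z}^+ .$$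
   Context: $\mathcal H$ is a Hilbert space. $Q\in\mathcal N_\kappa(\mathcal H)$: an $\mathcal L(\mathcal H)$-valued function meromorphic in $\mathbb C\setminus\mathbb R$, $Q(\overline z)^*=Q(z)$, whose kernel $\frac{Q(z)-Q(w)^*}{z-\overline w}$ on $\mathcal D(Q)\cap\mathbb C^+$ has exactly $\kappa$ negative squares. The realization consists of a Pontryagin space $(\mathcal K,[\cdot,\cdot])$, a self-adjoint linear relation $A$ in $\mathcal K$, a point $z_0\in\varrho(A)\cap\mathbb C^+$ and a bounded $\Gamma:\mathcal H\to\mathcal K$; $\Gamma^+$ denotes the adjoint with respect to the Pontryagin inner product. *)

theory Defs
  imports "HOL-Analysis.Analysis"
begin

class complex_vector = real_vector +
  fixes scaleC :: "complex \<Rightarrow> 'a \<Rightarrow> 'a"  (infixr \<open>*\<^sub>C\<close> 75)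
  assumes scaleC_add_right: "a *\<^sub>C (x + y) = a *\<^sub>C x + a *\<^sub>C y"
    and scaleC_add_left: "(a + b) *\<^sub>C x = a *\<^sub>C x + b *\<^sub>C x"
    and scaleC_scaleC: "a *\<^sub>C (b *\<^sub>C x) = (a * b) *\<^sub>C x"
    and scaleC_one: "1 *\<^sub>C x = x"
    and scaleR_scaleC: "scaleR r x = complex_of_real r *\<^sub>C x"

class complex_normed_vector = complex_vector + real_normed_vector +
  assumes norm_scaleC: "norm (a *\<^sub>C x) = cmod a * norm x"

text \<open>Inner product linear in the first and antilinear in the second argument.\<close>
class complex_inner = complex_normed_vector +
  fixes cinner :: "'a \<Rightarrow> 'a \<Rightarrow> complex"
  assumes cinner_commute: "cinner x y = cnj (cinner y x)"
    and cinner_add_left: "cinner (x + y) z = cinner x z + cinner y z"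
    and cinner_scaleC_left: "cinner (a *\<^sub>C x) y = a * cinner x y"
    and cinner_nonneg: "0 \<le> Re (cinner x x)"
    and cinner_eq_zero_iff: "cinner x x = 0 \<longleftrightarrow> x = 0"
    and norm_eq_sqrt_cinner: "norm x = sqrt (Re (cinner x x))"

class chilbert_space = complex_inner + complete_space

definition clinear :: "('a::complex_vector \<Rightarrow> 'b::complex_vector) \<Rightarrow> bool" where
  "clinear T \<longleftrightarrow> (\<forall>x y. T (x + y) = T x + T y) \<and> (\<forall>a x. T (a *\<^sub>C x) = a *\<^sub>C T x)"

definition cbounded_linear :: "('a::complex_normed_vector \<Rightarrow> 'b::complex_normed_vector) \<Rightarrow> bool" where
  "cbounded_linear T \<longleftrightarrow> clinear T \<and> (\<exists>B. \<forall>x. norm (T x) \<le> B * norm x)"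

definition cadj :: "('a::complex_inner \<Rightarrow> 'b::complex_inner) \<Rightarrow> 'b \<Rightarrow> 'a" where
  "cadj T = (THE S. \<forall>x y. cinner (T x) y = cinner x (S y))"

definition binvertible :: "('a::complex_normed_vector \<Rightarrow> 'a) \<Rightarrow> bool" where
  "binvertible T \<longleftrightarrow> cbounded_linear T \<and>
     (\<exists>S. cbounded_linear S \<and> S \<circ> T = id \<and> T \<circ> S = id)"

definition binv :: "('a::complex_normed_vector \<Rightarrow> 'a) \<Rightarrow> 'a \<Rightarrow> 'a" where
  "binv T = (THE S. S \<circ> T = id \<and> T \<circ> S = id)"

text \<open>A Pontryagin space is represented as a Hilbert space together with a fundamental
  symmetry J whose negative eigenspace is finite-dimensional; the indefinite inner
  product is [x,y] = <J x, y>.\<close>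
definition fundamental_symmetry :: "('k::chilbert_space \<Rightarrow> 'k) \<Rightarrow> bool" where
  "fundamental_symmetry J \<longleftrightarrow> cbounded_linear J \<and> (\<forall>x. J (J x) = x) \<and>
     (\<forall>x y. cinner (J x) y = cinner x (J y)) \<and>
     (\<exists>B. finite B \<and> {x. J x = - x} \<subseteq> span B)"

definition pinner :: "('k::chilbert_space \<Rightarrow> 'k) \<Rightarrow> 'k \<Rightarrow> 'k \<Rightarrow> complex" where
  "pinner J x y = cinner (J x) y"

text \<open>Adjoint of an operator from a Hilbert space into the Pontryagin space with respect to
  the Pontryagin inner product: [T h, k] = <h, T^+ k>.\<close>
definition padj :: "('k::chilbert_space \<Rightarrow> 'k) \<Rightarrow> ('h::chilbert_space \<Rightarrow> 'k) \<Rightarrow> 'k \<Rightarrow> 'h" where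
  "padj J T = (THE S. \<forall>h k. pinner J (T h) k = cinner h (S k))"

definition rel_padj :: "('k::chilbert_space \<Rightarrow> 'k) \<Rightarrow> ('k \<times> 'k) set \<Rightarrow> ('k \<times> 'k) set" where
  "rel_padj J A = {(f, g). \<forall>(u, v)\<in>A. pinner J g u = pinner J f v}"

definition selfadjoint_rel :: "('k::chilbert_space \<Rightarrow> 'k) \<Rightarrow> ('k \<times> 'k) set \<Rightarrow> bool" where
  "selfadjoint_rel J A \<longleftrightarrow> A = rel_padj J A"

definition graph :: "('a \<Rightarrow> 'b) \<Rightarrow> ('a \<times> 'b) set" where
  "graph T = {(x, T x) | x. True}"

text \<open>The relation (A - z)^{-1}.\<close>
definition rel_res :: "('k::complex_vector \<times> 'k) set \<Rightarrow> complex \<Rightarrow> ('k \<times> 'k) set" where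
  "rel_res A z = {(g - z *\<^sub>C f, f) | f g. (f, g) \<in> A}"

definition resolvent_set :: "('k::complex_normed_vector \<times> 'k) set \<Rightarrow> complex set" where
  "resolvent_set A = {z. \<exists>R. cbounded_linear R \<and> rel_res A z = graph R}"

definition resolvent :: "('k::complex_normed_vector \<times> 'k) set \<Rightarrow> complex \<Rightarrow> 'k \<Rightarrow> 'k" where
  "resolvent A z = (THE R. rel_res A z = graph R)"

text \<open>Domain of holomorphy D(Q) in the nonreal plane (weak holomorphy, which for
  L(H)-valued functions is equivalent to holomorphy in operator norm).\<close>
definition hol_dom :: "(complex \<Rightarrow> 'h::chilbert_space \<Rightarrow> 'h) \<Rightarrow> complex set" where
  "hol_dom Q = {z. Im z \<noteq> 0 \<and> (\<exists>e>0. (\<forall>w\<in>ball z e. cbounded_linear (Q w)) \<and>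
      (\<forall>h g. (\<lambda>w. cinner (Q w h) g) holomorphic_on ball z e))}"

text \<open>The Hermitian kernel K (on the set S) has at least m negative squares: some Gram-type
  matrix built from finitely many points of S has an m-dimensional negative definite subspace.\<close>
definition neg_squares_ge ::
    "(complex \<Rightarrow> complex \<Rightarrow> 'h::chilbert_space \<Rightarrow> 'h) \<Rightarrow> complex set \<Rightarrow> nat \<Rightarrow> bool" where
  "neg_squares_ge K S m \<longleftrightarrow> (\<exists>(n::nat) (z::nat \<Rightarrow> complex) (h::nat \<Rightarrow> nat \<Rightarrow> 'h).
     (\<forall>i<n. z i \<in> S) \<and>
     (\<forall>a::nat \<Rightarrow> complex. (\<exists>p<m. a p \<noteq> 0) \<longrightarrow>
        Re (\<Sum>p<m. \<Sum>q<m. cnj (a p) * a q *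
              (\<Sum>i<n. \<Sum>j<n. cinner (K (z i) (z j) (h q j)) (h p i))) < 0))"

definition nevanlinna_kernel :: "(complex \<Rightarrow> 'h::chilbert_space \<Rightarrow> 'h) \<Rightarrow> complex \<Rightarrow> complex \<Rightarrow> 'h \<Rightarrow> 'h" where
  "nevanlinna_kernel Q z w = (\<lambda>h. (1 / (z - cnj w)) *\<^sub>C (Q z h - cadj (Q w) h))"

definition gen_nevanlinna :: "nat \<Rightarrow> (complex \<Rightarrow> 'h::chilbert_space \<Rightarrow> 'h) \<Rightarrow> bool" where
  "gen_nevanlinna \<kappa> Q \<longleftrightarrow>
     (\<forall>w. Im w \<noteq> 0 \<and> w \<notin> hol_dom Q \<longrightarrow>
        (\<exists>e>0. ball w e - {w} \<subseteq> hol_dom Q) \<and>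
        (\<exists>n::nat. \<forall>h g. \<exists>l. ((\<lambda>z. (z - w) ^ n * cinner (Q z h) g) \<longlongrightarrow> l) (at w))) \<and>
     (\<forall>z\<in>hol_dom Q. cnj z \<in> hol_dom Q \<and> cadj (Q (cnj z)) = Q z) \<and>
     neg_squares_ge (nevanlinna_kernel Q) (hol_dom Q \<inter> {z. Im z > 0}) \<kappa> \<and>
     \<not> neg_squares_ge (nevanlinna_kernel Q) (hol_dom Q \<inter> {z. Im z > 0}) (Suc \<kappa>)"

end

theory Submission
  imports Defs
begin

lemma scaleC_zero_left[simp]: "(0::complex) *\<^sub>C (x::'a::complex_vector) = 0"
  by (metis of_real_0 scaleR_scaleC scaleR_zero_left)
lemma scaleC_zero_right[simp]: "a *\<^sub>C (0::'a::complex_vector) = 0"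
proof -
  have "a *\<^sub>C ((0::complex) *\<^sub>C (0::'a)) = (a*0) *\<^sub>C 0" by (rule scaleC_scaleC)
  then show ?thesis by simp
qed
lemma scaleC_minus1: "(-1) *\<^sub>C (x::'a::complex_vector) = - x"
proof -
  have "(-1) *\<^sub>C x = complex_of_real (-1) *\<^sub>C x" by simp
  also have "\<dots> = scaleR (-1) x" by (simp only: scaleR_scaleC)
  finally show ?thesis by simp
qed
lemma scaleC_minus_left: "(- a) *\<^sub>C (x::'a::complex_vector) = - (a *\<^sub>C x)"
proof -
  have "(- a) *\<^sub>C x = (-1) *\<^sub>C (a *\<^sub>C x)" by (simp add: scaleC_scaleC)
  then show ?thesis by (simp add: scaleC_minus1)
qed
lemma scaleC_minus_right: "a *\<^sub>C (- x::'a::complex_vector) = - (a *\<^sub>C x)"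
proof -
  have "a *\<^sub>C (- x) = a *\<^sub>C ((-1) *\<^sub>C x)" by (simp add: scaleC_minus1)
  also have "\<dots> = (- a) *\<^sub>C x" by (simp add: scaleC_scaleC)
  finally show ?thesis by (simp add: scaleC_minus_left)
qed
lemma scaleC_diff_right: "a *\<^sub>C (x - y::'a::complex_vector) = a *\<^sub>C x - a *\<^sub>C y"
  by (simp only: diff_conv_add_uminus scaleC_add_right scaleC_minus_right)
lemma scaleC_diff_left: "(a - b) *\<^sub>C (x::'a::complex_vector) = a *\<^sub>C x - b *\<^sub>C x"
  by (simp only: diff_conv_add_uminus scaleC_add_left scaleC_minus_left)

lemma cinner_add_right: "cinner x (y + z) = cinner x y + cinner (x::'a::complex_inner) z"
proof -
  have "cinner x (y + z) = cnj (cinner (y + z) x)" by (rule cinner_commute)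
  also have "\<dots> = cnj (cinner y x) + cnj (cinner z x)" by (simp add: cinner_add_left)
  finally show ?thesis by (simp add: cinner_commute[of y x] cinner_commute[of z x])
qed
lemma cinner_scaleC_right: "cinner x (a *\<^sub>C y) = cnj a * cinner (x::'a::complex_inner) y"
proof -
  have "cinner x (a *\<^sub>C y) = cnj (cinner (a *\<^sub>C y) x)" by (rule cinner_commute)
  also have "\<dots> = cnj a * cnj (cinner y x)" by (simp add: cinner_scaleC_left)
  finally show ?thesis by (simp add: cinner_commute[of y x])
qed
lemma cinner_zero_left[simp]: "cinner 0 (x::'a::complex_inner) = 0"
proof -
  have "cinner ((0::complex) *\<^sub>C (0::'a)) x = 0 * cinner 0 x" by (rule cinner_scaleC_left)
  then show ?thesis by (simp only: scaleC_zero_left mult_zero_left)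
qed
lemma cinner_zero_right[simp]: "cinner (x::'a::complex_inner) 0 = 0"
proof -
  have "cinner x ((0::complex) *\<^sub>C (0::'a)) = cnj 0 * cinner x 0" by (rule cinner_scaleC_right)
  then show ?thesis by (simp only: scaleC_zero_left complex_cnj_zero mult_zero_left)
qed
lemma cinner_minus_left: "cinner (- x) (y::'a::complex_inner) = - cinner x y"
proof -
  have "cinner ((-1) *\<^sub>C x) y = (-1) * cinner x y" by (rule cinner_scaleC_left)
  then show ?thesis by (simp only: scaleC_minus1 mult_minus1)
qed
lemma cinner_minus_right: "cinner x (- y::'a::complex_inner) = - cinner x y"
proof -
  have "cinner x ((-1) *\<^sub>C y) = cnj (-1) * cinner x y" by (rule cinner_scaleC_right)
  then show ?thesis by (simp only: scaleC_minus1 complex_cnj_minus complex_cnj_one mult_minus1)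
qed
lemma cinner_diff_left: "cinner (x - y) (z::'a::complex_inner) = cinner x z - cinner y z"
  by (simp only: cinner_add_left cinner_minus_left diff_conv_add_uminus)
lemma cinner_diff_right: "cinner x (y - z::'a::complex_inner) = cinner x y - cinner x z"
  by (simp only: cinner_add_right cinner_minus_right diff_conv_add_uminus)

lemma cinner_ext: "(\<And>h. cinner h s = cinner h (t::'a::complex_inner)) \<Longrightarrow> s = t"
proof -
  assume "\<And>h. cinner h s = cinner h t"
  then have "cinner (s - t) (s - t) = 0" by (simp add: cinner_diff_right)
  then show "s = t" by (simp add: cinner_eq_zero_iff)
qed
lemma cinner_ext_left: "(\<And>h. cinner s h = cinner (t::'a::complex_inner) h) \<Longrightarrow> s = t"
proof -
  assume "\<And>h. cinner s h = cinner t h"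
  then have "cinner (s - t) (s - t) = 0" by (simp add: cinner_diff_left)
  then show "s = t" by (simp add: cinner_eq_zero_iff)
qed

lemma cinner_self_real: "cinner x (x::'a::complex_inner) = complex_of_real ((norm x)^2)"
proof -
  have "cinner x x = cnj (cinner x x)" by (rule cinner_commute)
  then have "Im (cinner x x) = - Im (cinner x x)" by (metis cnj.sel(2))
  then have "Im (cinner x x) = 0" by linarith
  moreover have "Re (cinner x x) = (norm x)^2"
    using cinner_nonneg[of x] by (simp add: norm_eq_sqrt_cinner)
  ultimately show ?thesis by (simp add: complex_eq_iff)
qed

lemma cauchy_schwarz: "cmod (cinner x y) \<le> norm x * norm (y::'a::complex_inner)"
proof (cases "y = 0")
  case True then show ?thesis by simp
next
  case False
  define a where "a = cinner y y"
  define c where "c = cinner x y"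
  have a: "a = complex_of_real ((norm y)^2)" unfolding a_def by (rule cinner_self_real)
  have xx: "cinner x x = complex_of_real ((norm x)^2)" by (rule cinner_self_real)
  have yx: "cinner y x = cnj c" unfolding c_def by (rule cinner_commute)
  have cc: "c * cnj c = complex_of_real ((cmod c)^2)" by (rule complex_norm_square[symmetric])
  define v where "v = a *\<^sub>C x - c *\<^sub>C y"
  have "cinner v v = cnj a * (a * cinner x x - c * cinner y x) - cnj c * (a * cinner x y - c * cinner y y)"
    unfolding v_def by (simp only: cinner_diff_left cinner_diff_right cinner_scaleC_left cinner_scaleC_right)
  also have "\<dots> = a * (a * cinner x x - c * cnj c)"
    using a yx by (simp add: algebra_simps c_def[symmetric] a_def[symmetric])
  also have "\<dots> = complex_of_real ((norm y)^2 * ((norm y)^2 * (norm x)^2 - (cmod c)^2))"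
    using a xx cc by simp
  finally have "Re (cinner v v) = (norm y)^2 * ((norm y)^2 * (norm x)^2 - (cmod c)^2)"
    by simp
  then have "0 \<le> (norm y)^2 * ((norm y)^2 * (norm x)^2 - (cmod c)^2)"
    using cinner_nonneg[of v] by simp
  moreover have "(norm y)^2 > 0" using False by simp
  ultimately have "(cmod c)^2 \<le> (norm x * norm y)^2"
    by (simp add: zero_le_mult_iff power_mult_distrib mult.commute)
  then show ?thesis unfolding c_def
    using power2_le_imp_le[OF _ mult_nonneg_nonneg[OF norm_ge_zero norm_ge_zero]] by blast
qed

lemma cinner_add_add: "cinner (x + y) (x + y) = cinner x x + cinner x y + cinner y x + cinner (y::'a::complex_inner) y"
  by (simp add: cinner_add_left cinner_add_right)

lemma cinner_diff_diff: "cinner (x - y) (x - y) = cinner x x - cinner x y - cinner y x + cinner (y::'a::complex_inner) y"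
  by (simp add: cinner_diff_left cinner_diff_right)

lemma parallelogram: "(norm (x + y))^2 + (norm (x - y))^2 = 2 * (norm x)^2 + 2 * (norm (y::'a::complex_inner))^2"
proof -
  have "complex_of_real ((norm (x + y))^2 + (norm (x - y))^2) = cinner (x + y) (x + y) + cinner (x - y) (x - y)"
    by (simp only: cinner_self_real of_real_add)
  also have "\<dots> = 2 * cinner x x + 2 * cinner y y"
    by (simp only: cinner_add_add cinner_diff_diff) (simp add: algebra_simps)
  also have "\<dots> = complex_of_real (2 * (norm x)^2 + 2 * (norm y)^2)"
    by (simp only: cinner_self_real) simp
  finally show ?thesis by (simp only: of_real_eq_iff)
qed

lemma cinner_expand_t: "cinner (x + t *\<^sub>C n) (x + t *\<^sub>C n) =
   cinner x x + cnj t * cinner x n + t * cinner n x + t * cnj t * cinner n (n::'a::complex_inner)"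
  by (simp add: cinner_add_left cinner_add_right cinner_scaleC_left cinner_scaleC_right algebra_simps)

lemma riesz:
  fixes f :: "'a::chilbert_space \<Rightarrow> complex"
  assumes add: "\<And>x y. f (x + y) = f x + f y"
    and sc: "\<And>a x. f (a *\<^sub>C x) = a * f x"
    and bd: "\<And>x. cmod (f x) \<le> B * norm x"
  shows "\<exists>y. \<forall>x. f x = cinner x y"
proof (cases "\<forall>x. f x = 0")
  case True
  then show ?thesis by (intro exI[of _ 0]) simp
next
  case False
  then obtain x0 where x0: "f x0 \<noteq> 0" by blast
  have f0: "f 0 = 0" using sc[of 0 0] by simp
  have fR: "f (scaleR r x) = scaleR r (f x)" for r x
    by (simp add: scaleR_scaleC sc scaleR_conv_of_real)
  have bl: "bounded_linear f"
    by (rule bounded_linear_intro[of f B]) (use add fR bd in \<open>auto simp: mult.commute\<close>)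
  define M where "M = {x. f x = 1}"
  have M_ne: "M \<noteq> {}"
  proof -
    have "f (inverse (f x0) *\<^sub>C x0) = 1" using x0 by (simp add: sc)
    then show ?thesis unfolding M_def by blast
  qed
  have closedM: "closed M" unfolding M_def
    by (rule closed_Collect_eq) (use linear_continuous_on[OF bl] in auto)
  define d where "d = Inf (norm ` M)"
  have bdd: "bdd_below (norm ` M)" by (rule bdd_belowI[of _ 0]) auto
  have d_le: "d \<le> norm x" if "x \<in> M" for x
    unfolding d_def using bdd that by (simp add: cInf_lower)
  have d0: "0 \<le> d" unfolding d_def using M_ne by (auto intro!: cInf_greatest)
  have ex: "\<exists>x\<in>M. (norm x)^2 < d^2 + inverse (real (Suc n))" for n
  proof -
    have "d < sqrt (d^2 + inverse (real (Suc n)))"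
      using d0 by (metis abs_of_nonneg inverse_positive_iff_positive less_add_same_cancel1 of_nat_0_less_iff real_sqrt_abs real_sqrt_less_iff zero_less_Suc)
    then obtain x where x: "x \<in> M" "norm x < sqrt (d^2 + inverse (real (Suc n)))"
      using cInf_less_iff[OF _ bdd] M_ne unfolding d_def by auto
    then have "(norm x)^2 < d^2 + inverse (real (Suc n))"
      by (metis norm_ge_zero real_sqrt_less_iff real_sqrt_pow2_iff real_sqrt_power sqrt_le_D zero_le_power2 less_le_trans) 
    then show ?thesis using x by blast
  qed
  then obtain X where X: "\<And>n. X n \<in> M" "\<And>n. (norm (X n))^2 < d^2 + inverse (real (Suc n))"
    by metis
  have mid: "4 * d^2 \<le> (norm (x + y))^2" if "x \<in> M" "y \<in> M" for x y
  proof -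
    have "f (scaleR (1/2) (x + y)) = 1" using that by (simp add: fR add M_def scaleR_conv_of_real)
    then have "d \<le> norm (scaleR (1/2) (x + y))" using d_le M_def by blast
    then have "2 * d \<le> norm (x + y)" by simp
    then have "(2 * d)^2 \<le> (norm (x + y))^2" by (rule power_mono) (use d0 in auto)
    then show ?thesis by (simp add: power_mult_distrib)
  qed
  have cau: "(norm (X m - X n))^2 \<le> 2 * inverse (real (Suc m)) + 2 * inverse (real (Suc n))" for m n
    using parallelogram[of "X m" "X n"] mid[OF X(1)[of m] X(1)[of n]] X(2)[of m] X(2)[of n] by linarith
  have "Cauchy X"
  proof (rule metric_CauchyI)
    fix e :: real assume e: "0 < e"
    obtain N where N: "inverse (real (Suc N)) < e^2 / 4" using reals_Archimedean[of "e^2/4"] e by auto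
    have "dist (X m) (X n) < e" if "N \<le> m" "N \<le> n" for m n
    proof -
      have im: "inverse (real (Suc m)) \<le> inverse (real (Suc N))" using that by (simp add: le_imp_inverse_le)
      have i_n: "inverse (real (Suc n)) \<le> inverse (real (Suc N))" using that by (simp add: le_imp_inverse_le)
      have "(norm (X m - X n))^2 < e^2" using cau[of m n] im i_n N by linarith
      then have "norm (X m - X n) < e" using e by (simp add: power_less_imp_less_base less_le)
      then show ?thesis by (simp add: dist_norm)
    qed
    then show "\<exists>N. \<forall>m\<ge>N. \<forall>n\<ge>N. dist (X m) (X n) < e" by blast
  qed
  then obtain y0 where y0: "X \<longlonglongrightarrow> y0" using Cauchy_convergent_iff convergent_def by blast
  have y0M: "y0 \<in> M" using closedM X(1) y0 closed_sequential_limits by blast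
  have "(\<lambda>n. (norm (X n))^2) \<longlonglongrightarrow> (norm y0)^2"
    by (intro tendsto_intros y0)
  then have "(norm y0)^2 \<le> d^2"
    using LIMSEQ_le[OF _ LIMSEQ_inverse_real_of_nat_add[of "d^2"]] X(2) less_imp_le by blast
  then have ymin: "norm y0 \<le> norm x" if "x \<in> M" for x
    using d0 d_le[OF that] power2_le_imp_le by fastforce
  have fy0: "f y0 = 1" using y0M M_def by simp
  have y0nz: "y0 \<noteq> 0" using fy0 f0 by auto
  have orth: "cinner n y0 = 0" if fn: "f n = 0" for n
  proof -
    define c where "c = cinner y0 n"
    define r where "r = inverse ((norm n)^2 + 1)"
    have np: "0 < (norm n)^2 + 1" by (simp add: add_nonneg_pos)
    have r0: "0 < r" unfolding r_def using np by simp
    have rn: "r * (norm n)^2 < 1" unfolding r_def using np by (simp add: field_simps)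
    define t where "t = - (complex_of_real r * c)"
    have "f (y0 + t *\<^sub>C n) = 1" using fy0 fn by (simp add: add sc)
    then have "norm y0 \<le> norm (y0 + t *\<^sub>C n)" using ymin M_def by blast
    then have le: "(norm y0)^2 \<le> (norm (y0 + t *\<^sub>C n))^2" by (simp add: power_mono)
    have nc: "cinner n y0 = cnj c" unfolding c_def by (rule cinner_commute)
    have cc: "c * cnj c = complex_of_real ((cmod c)^2)" by (rule complex_norm_square[symmetric])
    have "complex_of_real ((norm (y0 + t *\<^sub>C n))^2) = cinner (y0 + t *\<^sub>C n) (y0 + t *\<^sub>C n)"
      by (simp only: cinner_self_real)
    also have "\<dots> = cinner y0 y0 + cnj t * c + t * cnj c + t * cnj t * cinner n n"
      by (simp only: cinner_expand_t nc c_def)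
    also have "\<dots> = cinner y0 y0 - 2 * complex_of_real r * (c * cnj c) + (complex_of_real r)^2 * (c * cnj c) * cinner n n"
      unfolding t_def by (simp add: algebra_simps power2_eq_square)
    also have "\<dots> = complex_of_real ((norm y0)^2 - 2 * r * (cmod c)^2 + r^2 * (cmod c)^2 * (norm n)^2)"
      by (simp only: cc cinner_self_real) simp
    finally have "(norm (y0 + t *\<^sub>C n))^2 = (norm y0)^2 - 2 * r * (cmod c)^2 + r^2 * (cmod c)^2 * (norm n)^2"
      by (simp only: of_real_eq_iff)
    with le have "0 \<le> r * (cmod c)^2 * (r * (norm n)^2 - 2)" by (simp add: algebra_simps power2_eq_square)
    moreover have "r * (norm n)^2 - 2 < 0" using rn by simp
    ultimately have "r * (cmod c)^2 \<le> 0" by (smt (verit) zero_le_mult_iff)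
    then have "(cmod c)^2 \<le> 0" using r0 by (simp add: mult_le_0_iff)
    then have "c = 0" by simp
    then show ?thesis using nc by simp
  qed
  have "cinner x y0 = f x * complex_of_real ((norm y0)^2)" for x
  proof -
    have "f (x - f x *\<^sub>C y0) = 0"
      using add[of "x - f x *\<^sub>C y0" "f x *\<^sub>C y0"] by (simp add: sc fy0)
    then have "cinner (x - f x *\<^sub>C y0) y0 = 0" by (rule orth)
    then show ?thesis by (simp add: cinner_diff_left cinner_scaleC_left cinner_self_real)
  qed
  then show ?thesis using y0nz
    by (intro exI[of _ "complex_of_real (inverse ((norm y0)^2)) *\<^sub>C y0"])
       (simp add: cinner_scaleC_right field_simps)
qed

lemma cbl_add: "cbounded_linear T \<Longrightarrow> T (x + y) = T x + T y"
  unfolding cbounded_linear_def clinear_def by blast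
lemma cbl_scaleC: "cbounded_linear T \<Longrightarrow> T (a *\<^sub>C x) = a *\<^sub>C T x"
  unfolding cbounded_linear_def clinear_def by blast
lemma cbl_zero: "cbounded_linear T \<Longrightarrow> T 0 = 0"
  using cbl_scaleC[of T 0 0] by simp
lemma cbl_minus: "cbounded_linear T \<Longrightarrow> T (- x) = - T x"
  using cbl_scaleC[of T "-1" x] by (simp add: scaleC_minus1)
lemma cbl_diff: "cbounded_linear T \<Longrightarrow> T (x - y) = T x - T y"
  by (simp only: diff_conv_add_uminus cbl_add cbl_minus)
lemma cbl_bound: "cbounded_linear T \<Longrightarrow> \<exists>B\<ge>0. \<forall>x. norm (T x) \<le> B * norm x"
proof -
  assume "cbounded_linear T"
  then obtain B where B: "\<And>x. norm (T x) \<le> B * norm x" unfolding cbounded_linear_def by blast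
  have "norm (T x) \<le> max B 0 * norm x" for x
    using B[of x] mult_right_mono[of B "max B 0" "norm x"] by simp
  then show ?thesis by (intro exI[of _ "max B 0"]) auto
qed
lemma cbl_compose:
  assumes "cbounded_linear S" "cbounded_linear T"
  shows "cbounded_linear (\<lambda>x. S (T x))"
proof -
  obtain B1 where B1: "B1 \<ge> 0" "\<And>x. norm (S x) \<le> B1 * norm x" using cbl_bound[OF assms(1)] by blast
  obtain B2 where B2: "B2 \<ge> 0" "\<And>x. norm (T x) \<le> B2 * norm x" using cbl_bound[OF assms(2)] by blast
  have "norm (S (T x)) \<le> (B1 * B2) * norm x" for x
  proof -
    have "norm (S (T x)) \<le> B1 * norm (T x)" by (rule B1(2))
    also have "\<dots> \<le> B1 * (B2 * norm x)" by (rule mult_left_mono[OF B2(2) B1(1)])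
    finally show ?thesis by (simp add: mult.assoc)
  qed
  then show ?thesis using assms unfolding cbounded_linear_def clinear_def by auto
qed
lemma cbl_id: "cbounded_linear (\<lambda>x. x)"
  unfolding cbounded_linear_def clinear_def by (auto intro!: exI[of _ 1])

lemma adj_cbl:
  assumes T: "cbounded_linear T" and adj: "\<And>x y. cinner (T x) y = cinner x (S y)"
  shows "cbounded_linear S"
proof -
  have add: "S (y1 + y2) = S y1 + S y2" for y1 y2
    by (rule cinner_ext) (simp add: adj[symmetric] cinner_add_right)
  have sc: "S (a *\<^sub>C y) = a *\<^sub>C S y" for a y
    by (rule cinner_ext) (simp add: adj[symmetric] cinner_scaleC_right)
  obtain B where B: "B \<ge> 0" "\<And>x. norm (T x) \<le> B * norm x" using cbl_bound[OF T] by blast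
  have "norm (S y) \<le> B * norm y" for y
  proof -
    have "complex_of_real ((norm (S y))^2) = cinner (T (S y)) y"
      by (simp only: cinner_self_real[symmetric] adj)
    then have "(norm (S y))^2 = cmod (cinner (T (S y)) y)"
      by (metis norm_of_real abs_of_nonneg zero_le_power2)
    also have "\<dots> \<le> norm (T (S y)) * norm y" by (rule cauchy_schwarz)
    also have "\<dots> \<le> (B * norm (S y)) * norm y" by (rule mult_right_mono[OF B(2) norm_ge_zero])
    finally have le: "norm (S y) * norm (S y) \<le> norm (S y) * (B * norm y)"
      by (simp add: power2_eq_square algebra_simps)
    show ?thesis
    proof (cases "norm (S y) = 0")
      case True then show ?thesis using B by simp
    next
      case False then have "norm (S y) > 0" by simp
      then show ?thesis using le by simp
    qed
  qed
  then show ?thesis unfolding cbounded_linear_def clinear_def using add sc by blast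
qed

lemma adj_exists:
  fixes T :: "'a::chilbert_space \<Rightarrow> 'b::complex_inner"
  assumes T: "cbounded_linear T"
  shows "\<exists>S. \<forall>x y. cinner (T x) y = cinner x (S y)"
proof -
  obtain B where B: "B \<ge> 0" "\<And>x. norm (T x) \<le> B * norm x" using cbl_bound[OF T] by blast
  have "\<exists>s. \<forall>x. cinner (T x) y = cinner x s" for y
  proof (rule riesz[where B = "B * norm y"])
    show "cinner (T (x1 + x2)) y = cinner (T x1) y + cinner (T x2) y" for x1 x2
      by (simp add: cbl_add[OF T] cinner_add_left)
    show "cinner (T (a *\<^sub>C x)) y = a * cinner (T x) y" for a x
      by (simp add: cbl_scaleC[OF T] cinner_scaleC_left)
    show "cmod (cinner (T x) y) \<le> B * norm y * norm x" for x
    proof -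
      have "cmod (cinner (T x) y) \<le> norm (T x) * norm y" by (rule cauchy_schwarz)
      also have "\<dots> \<le> (B * norm x) * norm y" by (rule mult_right_mono[OF B(2) norm_ge_zero])
      finally show ?thesis by (simp add: algebra_simps)
    qed
  qed
  then show ?thesis by metis
qed

lemma cadj:
  fixes T :: "'a::chilbert_space \<Rightarrow> 'b::complex_inner"
  assumes T: "cbounded_linear T"
  shows "cinner (T x) y = cinner x (cadj T y)"
proof -
  obtain S where S: "\<forall>x y. cinner (T x) y = cinner x (S y)" using adj_exists[OF T] by blast
  have "cadj T = S" unfolding cadj_def
  proof (rule the_equality)
    show "\<forall>x y. cinner (T x) y = cinner x (S y)" by (rule S)
    fix S' assume S': "\<forall>x y. cinner (T x) y = cinner x (S' y)"
    show "S' = S"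
    proof
      fix y show "S' y = S y" by (rule cinner_ext) (metis S S')
    qed
  qed
  then show ?thesis using S by simp
qed

lemma cadj_cbl:
  fixes T :: "'a::chilbert_space \<Rightarrow> 'b::complex_inner"
  assumes T: "cbounded_linear T"
  shows "cbounded_linear (cadj T)"
  by (rule adj_cbl[OF T]) (rule cadj[OF T])

lemma binv:
  assumes "binvertible T"
  shows "cbounded_linear (binv T)" "\<And>x. binv T (T x) = x" "\<And>x. T (binv T x) = x" "cbounded_linear T"
proof -
  obtain S where S: "cbounded_linear S" "S \<circ> T = id" "T \<circ> S = id" "cbounded_linear T"
    using assms unfolding binvertible_def by blast
  have "binv T = S" unfolding binv_def
  proof (rule the_equality)
    show "S \<circ> T = id \<and> T \<circ> S = id" using S by simp
    fix S' assume "S' \<circ> T = id \<and> T \<circ> S' = id"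
    then have "S' = S' \<circ> (T \<circ> S)" using S by simp
    also have "\<dots> = (S' \<circ> T) \<circ> S" by (simp add: comp_assoc)
    finally have "S' = (S' \<circ> T) \<circ> S" .
    then show "S' = S" using \<open>S' \<circ> T = id \<and> T \<circ> S' = id\<close> by simp
  qed
  then show "cbounded_linear (binv T)" "\<And>x. binv T (T x) = x" "\<And>x. T (binv T x) = x" "cbounded_linear T"
    using S by (auto simp: fun_eq_iff simp del: \<open>binv T = S\<close>) (simp_all add: \<open>binv T = S\<close>)
qed

lemma binvertibleI:
  assumes "cbounded_linear T" "cbounded_linear S" "\<And>x. S (T x) = x" "\<And>x. T (S x) = x"
  shows "binvertible T"
  unfolding binvertible_def using assms by (auto intro!: exI[of _ S] simp: fun_eq_iff)

section \<open>Pontryagin inner product\<close>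

lemma fs_cbl: "fundamental_symmetry J \<Longrightarrow> cbounded_linear J"
  unfolding fundamental_symmetry_def by blast
lemma fs_inv: "fundamental_symmetry J \<Longrightarrow> J (J x) = x"
  unfolding fundamental_symmetry_def by blast
lemma fs_sym: "fundamental_symmetry J \<Longrightarrow> cinner (J x) y = cinner x (J y)"
  unfolding fundamental_symmetry_def by blast

lemma pinner_add_left: "fundamental_symmetry J \<Longrightarrow> pinner J (x + y) z = pinner J x z + pinner J y z"
  unfolding pinner_def by (simp add: cbl_add[OF fs_cbl] cinner_add_left)
lemma pinner_add_right: "pinner J x (y + z) = pinner J x y + pinner J x z"
  unfolding pinner_def by (simp add: cinner_add_right)
lemma pinner_scaleC_left: "fundamental_symmetry J \<Longrightarrow> pinner J (a *\<^sub>C x) y = a * pinner J x y"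
  unfolding pinner_def by (simp add: cbl_scaleC[OF fs_cbl] cinner_scaleC_left)
lemma pinner_scaleC_right: "pinner J x (a *\<^sub>C y) = cnj a * pinner J x y"
  unfolding pinner_def by (simp add: cinner_scaleC_right)
lemma pinner_diff_left: "fundamental_symmetry J \<Longrightarrow> pinner J (x - y) z = pinner J x z - pinner J y z"
  unfolding pinner_def by (simp add: cbl_diff[OF fs_cbl] cinner_diff_left)
lemma pinner_diff_right: "pinner J x (y - z) = pinner J x y - pinner J x z"
  unfolding pinner_def by (simp add: cinner_diff_right)
lemma pinner_commute: "fundamental_symmetry J \<Longrightarrow> pinner J x y = cnj (pinner J y x)"
  unfolding pinner_def by (metis cinner_commute fs_sym)
lemma pinner_ext: "fundamental_symmetry J \<Longrightarrow> (\<And>u. pinner J u a = pinner J u b) \<Longrightarrow> a = b"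
  unfolding pinner_def by (rule cinner_ext) (metis fs_inv)

lemma padj_unique:
  fixes T :: "'h::chilbert_space \<Rightarrow> 'k::chilbert_space"
  assumes "\<And>h k. pinner J (T h) k = cinner h (S k)"
  shows "padj J T = S"
  unfolding padj_def
proof (rule the_equality)
  show "\<forall>h k. pinner J (T h) k = cinner h (S k)" using assms by blast
  fix S' assume S': "\<forall>h k. pinner J (T h) k = cinner h (S' k)"
  show "S' = S"
  proof
    fix k show "S' k = S k" by (rule cinner_ext) (metis S' assms)
  qed
qed

lemma padj_prop:
  fixes T :: "'h::chilbert_space \<Rightarrow> 'k::chilbert_space"
  assumes J: "fundamental_symmetry J" and T: "cbounded_linear T"
  shows "pinner J (T h) k = cinner h (padj J T k)"
proof -
  have "padj J T = (\<lambda>k. cadj T (J k))"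
    by (rule padj_unique) (simp add: pinner_def fs_sym[OF J] cadj[OF T])
  then show ?thesis by (simp add: pinner_def fs_sym[OF J] cadj[OF T])
qed

section \<open>Resolvents\<close>

lemma graph_inj: "graph R = graph R' \<Longrightarrow> R = R'"
proof
  fix x assume "graph R = graph R'"
  then have "(x, R x) \<in> graph R'" unfolding graph_def by blast
  then show "R x = R' x" unfolding graph_def by auto
qed

lemma resolvent_eq: "rel_res A z = graph R \<Longrightarrow> resolvent A z = R"
  unfolding resolvent_def by (rule the_equality) (auto dest: graph_inj)

lemma res_set:
  assumes "z \<in> resolvent_set A"
  shows "cbounded_linear (resolvent A z)" "rel_res A z = graph (resolvent A z)"
proof -
  obtain R where R: "cbounded_linear R" "rel_res A z = graph R"
    using assms unfolding resolvent_set_def by blast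
  then show "cbounded_linear (resolvent A z)" "rel_res A z = graph (resolvent A z)"
    using resolvent_eq[OF R(2)] by auto
qed

lemma res_A: "rel_res A z = graph R \<Longrightarrow> (f, g) \<in> A \<Longrightarrow> R (g - z *\<^sub>C f) = f"
proof -
  assume "rel_res A z = graph R" "(f, g) \<in> A"
  then have "(g - z *\<^sub>C f, f) \<in> graph R" unfolding rel_res_def by blast
  then show ?thesis unfolding graph_def by auto
qed

lemma res_A2: "rel_res A z = graph R \<Longrightarrow> \<exists>f g. (f, g) \<in> A \<and> u = g - z *\<^sub>C f \<and> R u = f"
proof -
  assume "rel_res A z = graph R"
  moreover have "(u, R u) \<in> graph R" unfolding graph_def by blast
  ultimately have "(u, R u) \<in> rel_res A z" by simp
  then obtain f g where "(u, R u) = (g - z *\<^sub>C f, f)" "(f, g) \<in> A" unfolding rel_res_def by blast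
  then show ?thesis by auto
qed

lemma sa_sym:
  assumes J: "fundamental_symmetry J" and A: "selfadjoint_rel J A"
    and fg: "(f, g) \<in> A" and fg': "(f', g') \<in> A"
  shows "pinner J f' g = pinner J g' f"
proof -
  have "(f, g) \<in> rel_padj J A" using A fg unfolding selfadjoint_rel_def by simp
  then have "pinner J g f' = pinner J f g'" using fg' unfolding rel_padj_def by blast
  have "pinner J f' g = cnj (pinner J g f')" by (rule pinner_commute[OF J])
  also have "\<dots> = cnj (pinner J f g')" using \<open>pinner J g f' = pinner J f g'\<close> by simp
  also have "\<dots> = pinner J g' f" by (rule pinner_commute[OF J, symmetric])
  finally show ?thesis .
qed

lemma rho_sym:
  fixes A :: "('k::chilbert_space \<times> 'k) set"
  assumes J: "fundamental_symmetry J" and A: "selfadjoint_rel J A" and z: "z \<in> resolvent_set A"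
  shows "cnj z \<in> resolvent_set A"
    and "\<And>u v. pinner J (resolvent A z u) v = pinner J u (resolvent A (cnj z) v)"
proof -
  define R where "R = resolvent A z"
  have Rb: "cbounded_linear R" and Rg: "rel_res A z = graph R"
    using res_set[OF z] unfolding R_def by auto
  define S where "S = (\<lambda>v. J (cadj R (J v)))"
  have Sb: "cbounded_linear S" unfolding S_def
    by (rule cbl_compose[OF fs_cbl[OF J] cbl_compose[OF cadj_cbl[OF Rb] fs_cbl[OF J]]])
  have RS: "pinner J (R u) v = pinner J u (S v)" for u v
  proof -
    have "pinner J (R u) v = cinner u (cadj R (J v))"
      unfolding pinner_def by (simp add: fs_sym[OF J] cadj[OF Rb])
    also have "\<dots> = cinner (J (J u)) (cadj R (J v))" by (simp add: fs_inv[OF J])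
    also have "\<dots> = pinner J u (S v)" unfolding pinner_def S_def by (simp add: fs_sym[OF J])
    finally show ?thesis .
  qed
  have SR: "pinner J (S v) w = pinner J v (R w)" for v w
  proof -
    have "pinner J (S v) w = cnj (pinner J w (S v))" by (rule pinner_commute[OF J])
    also have "\<dots> = cnj (pinner J (R w) v)" by (simp only: RS)
    also have "\<dots> = pinner J v (R w)" by (rule pinner_commute[OF J, symmetric])
    finally show ?thesis .
  qed
  have "rel_res A (cnj z) = graph S"
  proof
    show "rel_res A (cnj z) \<subseteq> graph S"
    proof
      fix x assume "x \<in> rel_res A (cnj z)"
      then obtain f g where x: "x = (g - cnj z *\<^sub>C f, f)" and fg: "(f, g) \<in> A"
        unfolding rel_res_def by blast
      have "f = S (g - cnj z *\<^sub>C f)"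
      proof (rule pinner_ext[OF J])
        fix u
        obtain f' g' where fg': "(f', g') \<in> A" "u = g' - z *\<^sub>C f'" "R u = f'"
          using res_A2[OF Rg] by blast
        have "pinner J u (S (g - cnj z *\<^sub>C f)) = pinner J f' (g - cnj z *\<^sub>C f)"
          using RS[of u] fg' by simp
        also have "\<dots> = pinner J f' g - z * pinner J f' f"
          by (simp add: pinner_diff_right pinner_scaleC_right)
        also have "\<dots> = pinner J g' f - z * pinner J f' f"
          using sa_sym[OF J A fg fg'(1)] by simp
        also have "\<dots> = pinner J u f"
          using fg' by (simp add: pinner_diff_left[OF J] pinner_scaleC_left[OF J])
        finally show "pinner J u f = pinner J u (S (g - cnj z *\<^sub>C f))" by simp
      qed
      then show "x \<in> graph S" unfolding x graph_def by auto
    qed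
    show "graph S \<subseteq> rel_res A (cnj z)"
    proof
      fix x assume "x \<in> graph S"
      then obtain v where x: "x = (v, S v)" unfolding graph_def by blast
      have "(S v, v + cnj z *\<^sub>C S v) \<in> rel_padj J A"
        unfolding rel_padj_def
      proof (clarsimp)
        fix u' v' assume uv: "(u', v') \<in> A"
        define w where "w = v' - z *\<^sub>C u'"
        have Rw: "R w = u'" unfolding w_def by (rule res_A[OF Rg uv])
        have v': "v' = w + z *\<^sub>C u'" unfolding w_def by simp
        have "pinner J (S v) v' = pinner J (S v) w + cnj z * pinner J (S v) u'"
          unfolding v' by (simp add: pinner_add_right pinner_scaleC_right)
        also have "pinner J (S v) w = pinner J v u'" using SR[of v w] Rw by simp
        finally show "pinner J (v + cnj z *\<^sub>C S v) u' = pinner J (S v) v'"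
          by (simp add: pinner_add_left[OF J] pinner_scaleC_left[OF J])
      qed
      then have "(S v, v + cnj z *\<^sub>C S v) \<in> A" using A unfolding selfadjoint_rel_def by simp
      then have "((v + cnj z *\<^sub>C S v) - cnj z *\<^sub>C S v, S v) \<in> rel_res A (cnj z)"
        unfolding rel_res_def by blast
      then show "x \<in> rel_res A (cnj z)" unfolding x by simp
    qed
  qed
  then show "cnj z \<in> resolvent_set A" unfolding resolvent_set_def using Sb by blast
  show "pinner J (resolvent A z u) v = pinner J u (resolvent A (cnj z) v)" for u v
    using RS resolvent_eq[OF \<open>rel_res A (cnj z) = graph S\<close>] unfolding R_def by simp
qed

theorem lemma3p8:
  fixes \<kappa> :: nat
    and Q :: "complex \<Rightarrow> 'h::chilbert_space \<Rightarrow> 'h"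
    and J :: "'k::chilbert_space \<Rightarrow> 'k"
    and A Ahat :: "('k \<times> 'k) set"
    and z0 :: complex
    and \<Gamma> :: "'h \<Rightarrow> 'k"
    and Gz :: "complex \<Rightarrow> 'h \<Rightarrow> 'k"
    and Qhat :: "complex \<Rightarrow> 'h \<Rightarrow> 'h"
    and \<Gamma>hat :: "'h \<Rightarrow> 'k"
    and Gzhat :: "complex \<Rightarrow> 'h \<Rightarrow> 'k"
  assumes Q_class: "gen_nevanlinna \<kappa> Q"
    and J: "fundamental_symmetry J"
    and A_sa: "selfadjoint_rel J A"
    and z0: "z0 \<in> resolvent_set A" "Im z0 > 0"
    and \<Gamma>: "cbounded_linear \<Gamma>"
    and realization: "\<And>z. z \<in> resolvent_set A \<Longrightarrow>
        Q z = (\<lambda>h. cadj (Q z0) h + (z - cnj z0) *\<^sub>C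
                    padj J \<Gamma> (\<Gamma> h + (z - z0) *\<^sub>C resolvent A z (\<Gamma> h)))"
    and Qz0_inv: "binvertible (Q z0)"
    and Qhat_def: "\<And>z. Qhat z = (\<lambda>h. - binv (Q z) h)"
    and Gz_def: "\<And>z. Gz z = (\<lambda>h. \<Gamma> h + (z - z0) *\<^sub>C resolvent A z (\<Gamma> h))"
    and \<Gamma>hat_def: "\<Gamma>hat = \<Gamma> \<circ> Qhat z0"
    and Ahat: "\<And>z. z \<in> resolvent_set A \<Longrightarrow> binvertible (Q z) \<Longrightarrow>
        rel_res Ahat z =
          graph (\<lambda>k. resolvent A z k + Gz z (Qhat z (padj J (Gz (cnj z)) k)))"
    and Gzhat_def: "\<And>z. Gzhat z = (\<lambda>h. \<Gamma>hat h + (z - z0) *\<^sub>C resolvent Ahat z (\<Gamma>hat h))"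
  shows "\<forall>z \<in> resolvent_set A \<inter> resolvent_set Ahat. binvertible (Q z) \<longrightarrow>
           Gzhat z = Gz z \<circ> Qhat z \<and>
           resolvent A z =
             (\<lambda>k. resolvent Ahat z k + Gzhat z (Q z (padj J (Gzhat (cnj z)) k)))"
proof -
  note Jf = J
  note Gb = \<Gamma>
  define R where "R = resolvent A"
  define Gp where "Gp = padj J \<Gamma>"
  define C where "C = cadj (Q z0)"
  have Rb: "cbounded_linear (R w)" if "w \<in> resolvent_set A" for w
    using res_set[OF that] unfolding R_def by blast
  have cnjR: "cnj w \<in> resolvent_set A" if "w \<in> resolvent_set A" for w
    using rho_sym(1)[OF Jf A_sa that] .
  have Rsym: "pinner J (R w u) v = pinner J u (R (cnj w) v)" if "w \<in> resolvent_set A" for w u v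
    using rho_sym(2)[OF Jf A_sa that] unfolding R_def .
  have Gp: "pinner J (\<Gamma> h) k = cinner h (Gp k)" for h k
    unfolding Gp_def by (rule padj_prop[OF Jf Gb])
  have Qz0b: "cbounded_linear (Q z0)" using binv(4)[OF Qz0_inv] .
  have C: "cinner (Q z0 x) y = cinner x (C y)" for x y
    unfolding C_def by (rule cadj[OF Qz0b])
  have real: "Q w h = C h + (w - cnj z0) *\<^sub>C Gp (\<Gamma> h + (w - z0) *\<^sub>C R w (\<Gamma> h))"
    if "w \<in> resolvent_set A" for w h
    using realization[OF that] unfolding C_def Gp_def R_def by simp
  have real0: "Q z0 h = C h + (z0 - cnj z0) *\<^sub>C Gp (\<Gamma> h)" for h
    using real[OF z0(1), of h] by simp
  have K1: "cinner (Q w h) k = cinner h (Q (cnj w) k)" if w: "w \<in> resolvent_set A" for w h k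
  proof -
    define a where "a = pinner J (\<Gamma> h) (\<Gamma> k)"
    define b where "b = pinner J (\<Gamma> h) (R (cnj w) (\<Gamma> k))"
    define c0 where "c0 = cinner h (C k)"
    have "cinner (Q w h) k = cinner (C h) k + (w - cnj z0) * cinner (Gp (\<Gamma> h + (w - z0) *\<^sub>C R w (\<Gamma> h))) k"
      by (simp add: real[OF w] cinner_add_left cinner_scaleC_left)
    also have "cinner (Gp (\<Gamma> h + (w - z0) *\<^sub>C R w (\<Gamma> h))) k = a + (w - z0) * b"
    proof -
      have "cinner (Gp (\<Gamma> h + (w - z0) *\<^sub>C R w (\<Gamma> h))) k
          = cnj (pinner J (\<Gamma> k) (\<Gamma> h + (w - z0) *\<^sub>C R w (\<Gamma> h)))"
        by (metis Gp cinner_commute)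
      also have "\<dots> = pinner J (\<Gamma> h + (w - z0) *\<^sub>C R w (\<Gamma> h)) (\<Gamma> k)"
        by (rule pinner_commute[OF Jf, symmetric])
      also have "\<dots> = a + (w - z0) * pinner J (R w (\<Gamma> h)) (\<Gamma> k)"
        unfolding a_def by (simp add: pinner_add_left[OF Jf] pinner_scaleC_left[OF Jf])
      also have "pinner J (R w (\<Gamma> h)) (\<Gamma> k) = b" unfolding b_def by (rule Rsym[OF w])
      finally show ?thesis .
    qed
    also have "cinner (C h) k = c0 + (cnj z0 - z0) * a"
    proof -
      have "cinner (C h) k = cnj (cinner k (C h))" by (rule cinner_commute)
      also have "\<dots> = cnj (cinner (Q z0 k) h)" by (simp add: C)
      also have "\<dots> = cinner h (Q z0 k)" by (rule cinner_commute[symmetric])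
      also have "\<dots> = c0 + (cnj z0 - z0) * a"
        unfolding c0_def a_def by (simp add: real0 cinner_add_right cinner_scaleC_right Gp[symmetric])
      finally show ?thesis .
    qed
    also have "c0 + (cnj z0 - z0) * a + (w - cnj z0) * (a + (w - z0) * b) = c0 + (w - z0) * (a + (w - cnj z0) * b)"
      by (simp add: algebra_simps)
    also have "\<dots> = cinner h (Q (cnj w) k)"
      unfolding c0_def a_def b_def
      by (simp add: real[OF cnjR[OF w]] cinner_add_right cinner_scaleC_right Gp[symmetric]
          pinner_add_right pinner_scaleC_right)
    finally show ?thesis .
  qed
  define P where "P = (\<lambda>z k. Gp (k + (z - cnj z0) *\<^sub>C R z k))"
  have Pprop: "pinner J (Gz (cnj z) h) k = cinner h (P z k)" if z: "z \<in> resolvent_set A" for z h k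
  proof -
    have "pinner J (Gz (cnj z) h) k = pinner J (\<Gamma> h) k + (cnj z - z0) * pinner J (R (cnj z) (\<Gamma> h)) k"
      by (simp add: Gz_def R_def pinner_add_left[OF Jf] pinner_scaleC_left[OF Jf])
    also have "pinner J (R (cnj z) (\<Gamma> h)) k = pinner J (\<Gamma> h) (R z k)"
      using Rsym[OF cnjR[OF z]] by simp
    also have "pinner J (\<Gamma> h) k + (cnj z - z0) * pinner J (\<Gamma> h) (R z k) = cinner h (P z k)"
      unfolding P_def by (simp add: Gp[symmetric] pinner_add_right pinner_scaleC_right)
    finally show ?thesis .
  qed
  have Pdef: "padj J (Gz (cnj z)) = P z" if z: "z \<in> resolvent_set A" for z
    by (rule padj_unique) (rule Pprop[OF z])
  have KI: "(z - z0) *\<^sub>C P z (\<Gamma> g) = Q z g - Q z0 g" if z: "z \<in> resolvent_set A" for z g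
  proof (rule cinner_ext)
    fix x
    define a where "a = pinner J (\<Gamma> x) (\<Gamma> g)"
    define b where "b = pinner J (\<Gamma> x) (R z (\<Gamma> g))"
    have "cinner x ((z - z0) *\<^sub>C P z (\<Gamma> g)) = (cnj z - cnj z0) * (a + (cnj z - z0) * b)"
      unfolding P_def a_def b_def
      by (simp add: cinner_scaleC_right Gp[symmetric] pinner_add_right pinner_scaleC_right)
    also have "\<dots> = (cinner x (C g) + (cnj z - z0) * (a + (cnj z - cnj z0) * b)) - (cinner x (C g) + (cnj z0 - z0) * a)"
      by (simp add: algebra_simps)
    also have "\<dots> = cinner x (Q z g - Q z0 g)"
      unfolding a_def b_def
      by (simp add: cinner_diff_right real[OF z] real0 cinner_add_right cinner_scaleC_right Gp[symmetric]
          pinner_add_right pinner_scaleC_right)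
    finally show "cinner x ((z - z0) *\<^sub>C P z (\<Gamma> g)) = cinner x (Q z g - Q z0 g)" .
  qed
  have Gz_add: "Gz w (u + v) = Gz w u + Gz w v" if w: "w \<in> resolvent_set A" for w u v
    by (simp add: Gz_def cbl_add[OF Gb] cbl_add[OF res_set(1)[OF w]] scaleC_add_right algebra_simps)
  have Gz_minus: "Gz w (- u) = - Gz w u" if w: "w \<in> resolvent_set A" for w u
    by (simp add: Gz_def cbl_minus[OF Gb] cbl_minus[OF res_set(1)[OF w]] scaleC_minus_right)
  have Gz_scale: "Gz w (c *\<^sub>C u) = c *\<^sub>C Gz w u" if w: "w \<in> resolvent_set A" for w c u
    by (simp add: Gz_def cbl_scaleC[OF Gb] cbl_scaleC[OF res_set(1)[OF w]] scaleC_add_right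
        scaleC_scaleC mult.commute)
  have G1: "Gzhat z = Gz z \<circ> Qhat z" if z: "z \<in> resolvent_set A" and inv: "binvertible (Q z)" for z
  proof
    fix h
    define B where "B = binv (Q z)"
    define B0 where "B0 = binv (Q z0)"
    define g where "g = Qhat z0 h"
    have g: "g = - B0 h" unfolding g_def B0_def by (simp add: Qhat_def)
    have Bb: "cbounded_linear B" unfolding B_def using binv(1)[OF inv] .
    have resAh: "resolvent Ahat z = (\<lambda>k. R z k + Gz z (Qhat z (P z k)))"
      using resolvent_eq[OF Ahat[OF z inv]] Pdef[OF z] unfolding R_def by simp
    have Qz0g: "Q z0 g = - h" unfolding g B0_def using binv(3)[OF Qz0_inv] cbl_minus[OF Qz0b] by simp
    have key: "g + (z - z0) *\<^sub>C Qhat z (P z (\<Gamma> g)) = Qhat z h"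
    proof -
      have "(z - z0) *\<^sub>C Qhat z (P z (\<Gamma> g)) = - B ((z - z0) *\<^sub>C P z (\<Gamma> g))"
        by (simp add: Qhat_def B_def[symmetric] cbl_scaleC[OF Bb] scaleC_minus_right)
      also have "\<dots> = - B (Q z g) + B (Q z0 g)" by (simp add: KI[OF z] cbl_diff[OF Bb])
      also have "\<dots> = - g - B h"
        using binv(2)[OF inv] Qz0g cbl_minus[OF Bb] unfolding B_def by simp
      finally show ?thesis by (simp add: Qhat_def B_def)
    qed
    have "Gzhat z h = \<Gamma> g + (z - z0) *\<^sub>C (R z (\<Gamma> g) + Gz z (Qhat z (P z (\<Gamma> g))))"
      by (simp add: Gzhat_def \<Gamma>hat_def g_def resAh)
    also have "\<dots> = Gz z g + (z - z0) *\<^sub>C Gz z (Qhat z (P z (\<Gamma> g)))"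
      by (simp add: Gz_def R_def scaleC_add_right algebra_simps)
    also have "\<dots> = Gz z g + Gz z ((z - z0) *\<^sub>C Qhat z (P z (\<Gamma> g)))"
      by (simp only: Gz_scale[OF z])
    also have "\<dots> = Gz z (Qhat z h)" by (simp only: Gz_add[OF z, symmetric] key)
    finally show "Gzhat z h = (Gz z \<circ> Qhat z) h" by simp
  qed
  show ?thesis
  proof (intro ballI impI conjI)
    fix z assume zz: "z \<in> resolvent_set A \<inter> resolvent_set Ahat" and inv: "binvertible (Q z)"
    have z: "z \<in> resolvent_set A" using zz by blast
    show "Gzhat z = Gz z \<circ> Qhat z" by (rule G1[OF z inv])
    have zc: "cnj z \<in> resolvent_set A" by (rule cnjR[OF z])
    define B where "B = binv (Q z)"
    have Bb: "cbounded_linear B" unfolding B_def using binv(1)[OF inv] .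
    have Qzb: "cbounded_linear (Q z)" using binv(4)[OF inv] .
    have QcB: "cbounded_linear (Q (cnj z))"
      by (rule adj_cbl[OF Qzb]) (rule K1[OF z])
    define S' where "S' = cadj B"
    have invc: "binvertible (Q (cnj z))"
    proof (rule binvertibleI[OF QcB cadj_cbl[OF Bb]])
      show "cadj B (Q (cnj z) y) = y" for y
      proof (rule cinner_ext)
        fix x
        have "cinner x (cadj B (Q (cnj z) y)) = cinner (B x) (Q (cnj z) y)" by (rule cadj[OF Bb, symmetric])
        also have "\<dots> = cinner (Q z (B x)) y" by (rule K1[OF z, symmetric])
        also have "\<dots> = cinner x y" using binv(3)[OF inv] unfolding B_def by simp
        finally show "cinner x (cadj B (Q (cnj z) y)) = cinner x y" .
      qed
      show "Q (cnj z) (cadj B y) = y" for y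
      proof (rule cinner_ext)
        fix x
        have "cinner x (Q (cnj z) (cadj B y)) = cinner (Q z x) (cadj B y)" by (rule K1[OF z, symmetric])
        also have "\<dots> = cinner (B (Q z x)) y" by (rule cadj[OF Bb, symmetric])
        also have "\<dots> = cinner x y" using binv(2)[OF inv] unfolding B_def by simp
        finally show "cinner x (Q (cnj z) (cadj B y)) = cinner x y" .
      qed
    qed
    define Bc where "Bc = binv (Q (cnj z))"
    have Badj: "cinner (Bc x) y = cinner x (B y)" for x y
    proof -
      have "cinner (Q (cnj z) (Bc x)) (B y) = cinner (Bc x) (Q (cnj (cnj z)) (B y))" by (rule K1[OF zc])
      then show ?thesis using binv(3)[OF inv] binv(3)[OF invc] unfolding B_def Bc_def by simp
    qed
    have G1c: "Gzhat (cnj z) = Gz (cnj z) \<circ> Qhat (cnj z)" by (rule G1[OF zc invc])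
    have padjhat: "padj J (Gzhat (cnj z)) = (\<lambda>k. Qhat z (P z k))"
    proof (rule padj_unique)
      fix h k
      have "pinner J (Gzhat (cnj z) h) k = pinner J (Gz (cnj z) (Qhat (cnj z) h)) k" by (simp add: G1c)
      also have "\<dots> = cinner (Qhat (cnj z) h) (P z k)" by (rule Pprop[OF z])
      also have "\<dots> = cinner h (Qhat z (P z k))"
        by (simp add: Qhat_def cinner_minus_left cinner_minus_right Badj[unfolded Bc_def B_def])
      finally show "pinner J (Gzhat (cnj z) h) k = cinner h (Qhat z (P z k))" .
    qed
    have resAh: "resolvent Ahat z = (\<lambda>k. R z k + Gz z (Qhat z (P z k)))"
      using resolvent_eq[OF Ahat[OF z inv]] Pdef[OF z] unfolding R_def by simp
    show "resolvent A z = (\<lambda>k. resolvent Ahat z k + Gzhat z (Q z (padj J (Gzhat (cnj z)) k)))"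
    proof
      fix k
      define p where "p = P z k"
      have "Qhat z (Q z (Qhat z p)) = B p"
        using binv(3)[OF inv] cbl_minus[OF Qzb] cbl_minus[OF Bb] unfolding Qhat_def B_def by simp
      then have "resolvent Ahat z k + Gzhat z (Q z (padj J (Gzhat (cnj z)) k)) = R z k + Gz z (- B p) + Gz z (B p)"
        by (simp add: resAh padjhat G1[OF z inv] p_def[symmetric] Qhat_def B_def[symmetric])
      also have "\<dots> = R z k" by (simp add: Gz_minus[OF z])
      finally show "resolvent A z k = resolvent Ahat z k + Gzhat z (Q z (padj J (Gzhat (cnj z)) k))"
        unfolding R_def by simp
    qed
  qed
qed

end
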